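(* For every integer $n\ge 1$, $|\mathfrak D^1_{2n}(1342,4213)|=2^{n-1}$.
   Context: A Dumont permutation of the first kind of length $2n$ is a permutation $\pi\in\mathfrak S_{2n}$ such that for every $i=1,\dots,2n$: if $\pi(i)$ is even then $i<2n$ and $\pi(i)>\pi(i+1)$; if $\pi(i)$ is odd then $i=2n$ or $\pi(i)<\pi(i+1)$. $\mathfrak D^1_{2n}$ denotes the set of these. A permutation $\sigma$ contains a pattern $\tau\in\mathfrak S_k$ if some subsequence $(\sigma(i_1),\dots,\sigma(i_k))$, $i_1<\dots<i_k$, is order-isomorphic to $\tau$; otherwise $\sigma$ avoids $\tau$. $\mathfrak D^1_{2n}(T)$ denotes the set of permutations in $\mathfrak D^1_{2n}$ avoiding every pattern in $T$. *)

theory Defs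
  imports "HOL-Combinatorics.Permutations"
begin

text \<open>Permutations of [m] = {1..m} are functions on nat that permute {1..m}
(and are the identity elsewhere).  Patterns are given in one-line notation as
lists of the values 1..k.\<close>

definition dumont1 :: "nat \<Rightarrow> (nat \<Rightarrow> nat) \<Rightarrow> bool" where
  "dumont1 n \<pi> \<longleftrightarrow> \<pi> permutes {1..2*n} \<and>
     (\<forall>i\<in>{1..2*n}.
        (even (\<pi> i) \<longrightarrow> i < 2*n \<and> \<pi> i > \<pi> (i+1)) \<and>
        (odd (\<pi> i) \<longrightarrow> i = 2*n \<or> \<pi> i < \<pi> (i+1)))"

definition contains_pattern :: "nat \<Rightarrow> (nat \<Rightarrow> nat) \<Rightarrow> nat list \<Rightarrow> bool" where
  "contains_pattern m \<sigma> \<tau> \<longleftrightarrow>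
     (\<exists>idx :: nat \<Rightarrow> nat.
        (\<forall>a<length \<tau>. idx a \<in> {1..m}) \<and>
        (\<forall>a b. a < b \<and> b < length \<tau> \<longrightarrow> idx a < idx b) \<and>
        (\<forall>a<length \<tau>. \<forall>b<length \<tau>. \<sigma> (idx a) < \<sigma> (idx b) \<longleftrightarrow> \<tau> ! a < \<tau> ! b))"

definition dumont1_avoid :: "nat \<Rightarrow> nat list set \<Rightarrow> (nat \<Rightarrow> nat) set" where
  "dumont1_avoid n T = {\<pi>. dumont1 n \<pi> \<and> (\<forall>\<tau>\<in>T. \<not> contains_pattern (2*n) \<pi> \<tau>)}"

end

theory Submission
  imports Defs
begin


definition W :: "nat \<Rightarrow> (nat \<Rightarrow> nat) \<Rightarrow> bool" where
  "W M t \<longleftrightarrow> (\<forall>i. 1 \<le> i \<longrightarrow> i < M \<longrightarrow> (even (t i) \<longrightarrow> t (i+1) < t i) \<and> (odd (t i) \<longrightarrow> t i < t (i+1)))"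

definition P1 :: "nat \<Rightarrow> (nat \<Rightarrow> nat) \<Rightarrow> bool" where
  "P1 M t \<longleftrightarrow> (\<exists>i j k l. 1 \<le> i \<and> i < j \<and> j < k \<and> k < l \<and> l \<le> M \<and> t i < t l \<and> t l < t j \<and> t j < t k)"

definition P2 :: "nat \<Rightarrow> (nat \<Rightarrow> nat) \<Rightarrow> bool" where
  "P2 M t \<longleftrightarrow> (\<exists>i j k l. 1 \<le> i \<and> i < j \<and> j < k \<and> k < l \<and> l \<le> M \<and> t k < t j \<and> t j < t l \<and> t l < t i)"

lemma less4: "(a::nat) < 4 \<longleftrightarrow> a = 0 \<or> a = 1 \<or> a = 2 \<or> a = 3" by auto

lemma cp1: "contains_pattern M t [1,3,4,2] \<longleftrightarrow> P1 M t"
proof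
  assume "contains_pattern M t [1,3,4,2]"
  then obtain idx where a: "\<forall>a<length [1,3,4,2::nat]. idx a \<in> {1..M}" and b: "\<forall>a b. a < b \<and> b < length [1,3,4,2::nat] \<longrightarrow> idx a < idx b"
    and c: "\<forall>a<length [1,3,4,2::nat]. \<forall>b<length [1,3,4,2::nat]. t (idx a) < t (idx b) \<longleftrightarrow> [1,3,4,2::nat] ! a < [1,3,4,2::nat] ! b"
    unfolding contains_pattern_def by blast
  show "P1 M t" unfolding P1_def
    apply (rule exI[of _ "idx 0"], rule exI[of _ "idx 1"], rule exI[of _ "idx 2"], rule exI[of _ "idx 3"])
    using a b c by (auto simp: less4)
next
  assume "P1 M t"
  then obtain i j k l where h: "1 \<le> i \<and> i < j \<and> j < k \<and> k < l \<and> l \<le> M \<and> t i < t l \<and> t l < t j \<and> t j < t k"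
    unfolding P1_def by blast
  show "contains_pattern M t [1,3,4,2]" unfolding contains_pattern_def
    apply (rule exI[of _ "\<lambda>a. [i,j,k,l] ! a"])
    using h by (auto simp: less_Suc_eq)
qed

lemma cp2: "contains_pattern M t [4,2,1,3] \<longleftrightarrow> P2 M t"
proof
  assume "contains_pattern M t [4,2,1,3]"
  then obtain idx where a: "\<forall>a<length [4,2,1,3::nat]. idx a \<in> {1..M}" and b: "\<forall>a b. a < b \<and> b < length [4,2,1,3::nat] \<longrightarrow> idx a < idx b"
    and c: "\<forall>a<length [4,2,1,3::nat]. \<forall>b<length [4,2,1,3::nat]. t (idx a) < t (idx b) \<longleftrightarrow> [4,2,1,3::nat] ! a < [4,2,1,3::nat] ! b"
    unfolding contains_pattern_def by blast
  show "P2 M t" unfolding P2_def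
    apply (rule exI[of _ "idx 0"], rule exI[of _ "idx 1"], rule exI[of _ "idx 2"], rule exI[of _ "idx 3"])
    using a b c by (auto simp: less4)
next
  assume "P2 M t"
  then obtain i j k l where h: "1 \<le> i \<and> i < j \<and> j < k \<and> k < l \<and> l \<le> M \<and> t k < t j \<and> t j < t l \<and> t l < t i"
    unfolding P2_def by blast
  show "contains_pattern M t [4,2,1,3]" unfolding contains_pattern_def
    apply (rule exI[of _ "\<lambda>a. [i,j,k,l] ! a"])
    using h by (auto simp: less_Suc_eq)
qed



lemma par_c: "(v::nat) \<le> M \<Longrightarrow> even M \<Longrightarrow> even (M + 1 - v) \<longleftrightarrow> odd v" by presburger

lemma perm_intro:
  assumes "\<And>i. i \<notin> {1..M} \<Longrightarrow> p i = i" "\<And>i. i \<in> {1..(M::nat)} \<Longrightarrow> p i \<in> {1..M}" "inj_on p {1..M}"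
  shows "p permutes {1..M}"
proof (rule bij_imp_permutes)
  have "p ` {1..M} \<subseteq> {1..M}" using assms(2) by auto
  hence "p ` {1..M} = {1..M}" using endo_inj_surj[OF finite_atLeastAtMost _ assms(3)] by blast
  then show "bij_betw p {1..M} {1..M}" using assms(3) by (simp add: bij_betw_def)
qed (use assms in auto)

locale good =
  fixes M :: nat and t :: "nat \<Rightarrow> nat"
  assumes perm: "t permutes {1..M}" and evM: "even M" and M2: "M \<ge> 2"
    and W: "W M t" and nP1: "\<not> P1 M t" and nP2: "\<not> P2 M t"
begin

lemma rng: "1 \<le> i \<Longrightarrow> i \<le> M \<Longrightarrow> 1 \<le> t i \<and> t i \<le> M"
  using permutes_in_image[OF perm, of i] by auto

lemma injt: "1 \<le> i \<Longrightarrow> i \<le> M \<Longrightarrow> 1 \<le> j \<Longrightarrow> j \<le> M \<Longrightarrow> t i = t j \<Longrightarrow> i = j"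
  using permutes_inj[OF perm] by (auto simp: inj_def)

lemma sur: "1 \<le> y \<Longrightarrow> y \<le> M \<Longrightarrow> \<exists>i. 1 \<le> i \<and> i \<le> M \<and> t i = y"
  using permutes_image[OF perm] by (metis atLeastAtMost_iff imageE)

lemma wev: "1 \<le> i \<Longrightarrow> i < M \<Longrightarrow> even (t i) \<Longrightarrow> t (i+1) < t i"
  using W unfolding W_def by blast
lemma wod: "1 \<le> i \<Longrightarrow> i < M \<Longrightarrow> odd (t i) \<Longrightarrow> t i < t (i+1)"
  using W unfolding W_def by blast
lemma n1: "1 \<le> i \<Longrightarrow> i<j \<Longrightarrow> j<k \<Longrightarrow> k<l \<Longrightarrow> l \<le> M \<Longrightarrow> t i < t l \<Longrightarrow> t l < t j \<Longrightarrow> t j < t k \<Longrightarrow> False"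
  using nP1 unfolding P1_def by blast
lemma n2: "1 \<le> i \<Longrightarrow> i<j \<Longrightarrow> j<k \<Longrightarrow> k<l \<Longrightarrow> l \<le> M \<Longrightarrow> t k < t j \<Longrightarrow> t j < t l \<Longrightarrow> t l < t i \<Longrightarrow> False"
  using nP2 unfolding P2_def by blast

lemma E1:
  assumes xo: "odd (t M)"
  shows "t M = 1 \<or> t M = M - 1"
proof (rule ccontr)
  assume H: "\<not> (t M = 1 \<or> t M = M - 1)"
  define x where "x = t M"
  have xr: "1 \<le> x" "x \<le> M" using rng[of M] M2 x_def by auto
  have x3: "3 \<le> x" "x + 3 \<le> M" using H xo evM xr unfolding x_def[symmetric]
    by (auto, presburger+)
  obtain q where q: "1 \<le> q" "q \<le> M" "t q = 1" using sur[of 1] M2 by auto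
  obtain p where p: "1 \<le> p" "p \<le> M" "t p = M" using sur[of M] M2 by auto
  have "q \<noteq> M" using q x3 unfolding x_def by auto
  hence qM: "q < M" using q by linarith
  have "p \<noteq> M" using p x3 unfolding x_def by auto
  hence pM: "p < M" using p by linarith
  have "q \<noteq> p" using q p M2 by auto
  then consider "q < p" | "p < q" by linarith
  then show False
  proof cases
    case 1
    have "\<exists>s. 1 \<le> s \<and> s \<le> M \<and> t s = M - 1" using sur[of "M-1"] M2 by simp
    then obtain s where s: "1 \<le> s" "s \<le> M" "t s = M - 1" by blast
    have "s \<noteq> M" using s H unfolding x_def by auto
    hence sM: "s < M" using s by linarith
    have "t s < t (s+1)" using wod[OF s(1) sM] s evM M2 by (simp add: s(3))
    moreover have "t (s+1) \<le> M" using rng[of "s+1"] sM by auto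
    ultimately have "t (s+1) = t p" using s p by auto
    hence sp: "s + 1 = p" using injt[of "s+1" p] sM p by auto
    have "q \<noteq> s" using q s x3 by auto
    hence "q < s" using 1 sp by auto
    have "t q < t M" "t M < t s" "t s < t p" using q(3) s(3) p(3) x3 unfolding x_def by linarith+
    moreover have "s < p" using sp by linarith
    ultimately show False using n1[of q s p M] \<open>q < s\<close> q(1) pM by blast
  next
    case 2
    obtain s where s: "1 \<le> s" "s \<le> M" "t s = 2" using sur[of 2] M2 by auto
    have "s \<noteq> M" using s x3 unfolding x_def by auto
    hence sM: "s < M" using s by linarith
    have "t (s+1) < t s" using wev[OF s(1) sM] s by simp
    moreover have "1 \<le> t (s+1)" using rng[of "s+1"] sM by auto
    ultimately have "t (s+1) = t q" using s q by auto
    hence sq: "s + 1 = q" using injt[of "s+1" q] sM q by auto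
    have "p \<noteq> s" using p s M2 x3 by auto
    hence "p < s" using 2 sq by auto
    have "t q < t s" "t s < t M" "t M < t p" using q(3) s(3) p(3) x3 unfolding x_def by linarith+
    moreover have "s < q" using sq by linarith
    ultimately show False using n2[of p s q M] \<open>p < s\<close> p(1) qM by blast
  qed
qed

lemma E2:
  assumes xo: "odd (t M)"
  shows "t (M-1) = t M + 1"
proof -
  have M1: "1 \<le> M - 1" "M - 1 < M" using M2 by auto
  have cases: "t M = 1 \<or> t M = M - 1" using E1[OF xo] .
  show ?thesis
  proof (cases "t M = 1")
    case True
    have "\<exists>s. 1 \<le> s \<and> s \<le> M \<and> t s = 2" using sur[of 2] M2 by simp
    then obtain s where s: "1 \<le> s" "s \<le> M" "t s = 2" by blast
    have "s \<noteq> M" using s True by auto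
    hence sM: "s < M" using s by linarith
    have "t (s+1) < 2" using wev[OF s(1) sM] s by simp
    moreover have "1 \<le> t (s+1)" using rng[of "s+1"] sM by auto
    ultimately have "t (s+1) = t M" using True by auto
    hence "s + 1 = M" using injt[of "s+1" M] sM M2 by auto
    then show ?thesis using s True by auto
  next
    case False
    hence xM: "t M = M - 1" using cases by auto
    have M4: "M \<ge> 4" using False xM evM M2 by presburger
    have "\<exists>p. 1 \<le> p \<and> p \<le> M \<and> t p = M" using sur[of M] M2 by simp
    then obtain p where p: "1 \<le> p" "p \<le> M" "t p = M" by blast
    show ?thesis
    proof (cases "p = M - 1")
      case True
      then show ?thesis using p xM M2 by auto
    next
      case False
      have "p \<noteq> M" using p xM M2 by auto
      hence pM: "p < M - 1" using p False by linarith
      define a where "a = t (M-1)"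
      have ar: "1 \<le> a" "a \<le> M" using rng[of "M-1"] M1 a_def by auto
      have "a \<noteq> M" using injt[of p "M-1"] p M1 pM a_def by auto
      have ao: "odd a"
      proof
        assume "even a"
        hence "t M < a" using wev[OF M1] a_def M2 by simp
        thus False using xM ar \<open>a \<noteq> M\<close> by linarith
      qed
      have aM: "a < M - 1" using wod[OF M1] ao a_def xM M2 by simp
      have a1: "a + 1 < M - 1" using aM ao evM M2 by presburger
      have "\<exists>r. 1 \<le> r \<and> r \<le> M \<and> t r = a + 1" using sur[of "a+1"] a1 by simp
      then obtain r where r: "1 \<le> r" "r \<le> M" "t r = a + 1" by blast
      have "r \<noteq> M - 1" using r a_def by auto
      moreover have "r \<noteq> M" using r xM a1 by auto
      ultimately have rM: "r < M - 1" using r by linarith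
      have d1: "t (r+1) < a + 1" using wev[of r] r rM ao by simp
      show ?thesis
      proof (cases "r = M - 2")
        case True
        have "p \<noteq> r" using p r a1 by auto
        hence "p < M - 2" using pM True by linarith
        moreover have "t (M-1) < t (M-2)" "t (M-2) < t M" "t M < t p"
          using True r a_def xM a1 p by auto
        moreover have "M - 2 < M - 1" "M - 1 < M" using M4 by auto
        ultimately show ?thesis using n2[of p "M-2" "M-1" M] p(1) by blast
      next
        case False
        hence rM2: "r + 2 < M" using rM by linarith
        define d where "d = t (r+1)"
        have "d \<noteq> a" using injt[of "r+1" "M-1"] rM2 M1 a_def d_def by auto
        hence da: "d < a" using d1 d_def by linarith
        have dr: "1 \<le> d" using rng[of "r+1"] rM d_def by auto
        have "p \<noteq> r" using p r a1 by auto
        then consider "p < r" | "r < p" by linarith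
        then show ?thesis
        proof cases
          case 1
          have "t (r+1) < t r" "t r < t M" "t M < t p" using d_def da r xM a1 p by auto
          then show ?thesis using n2[of p r "r+1" M] 1 p(1) rM2 by simp
        next
          case 2
          have "p \<noteq> r + 1" using p d_def da ar by auto
          hence rp: "r + 1 < p" using 2 by linarith
          show ?thesis
          proof (cases "even d")
            case True
            have e: "t (r+2) < d" using wev[of "r+1"] True d_def rM by simp
            have "r + 2 \<noteq> M - 1" using e da a_def by auto
            hence "r + 2 < M - 1" using rM2 by linarith
            moreover have "t (r+2) < t (r+1)" "t (r+1) < t (M-1)" "t (M-1) < t r"
              using e d_def da a_def r by auto
            ultimately show ?thesis using n2[of r "r+1" "r+2" "M-1"] r(1) M1 by simp
          next
            case False
            have d1a: "d + 1 < a" using False ao da by presburger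
            have "\<exists>s. 1 \<le> s \<and> s \<le> M \<and> t s = d + 1" using sur[of "d+1"] d1a ar by simp
            then obtain s where s: "1 \<le> s" "s \<le> M" "t s = d + 1" by blast
            have "s \<noteq> M - 1" using s a_def d1a by auto
            moreover have "s \<noteq> M" using s xM d1a aM by auto
            moreover have "s \<noteq> r" using s r d1a by auto
            moreover have "s \<noteq> r + 1" using s d_def by auto
            ultimately consider "s < r" | "r + 1 < s \<and> s < M - 1" using s by linarith
            then show ?thesis
            proof cases
              case 1
              have "t s < t (M-1)" "t (M-1) < t r" "t r < t p" using s a_def d1a r p a1 by auto
              then show ?thesis using n1[of s r p "M-1"] 1 s(1) pM 2 by simp
            next
              case 2
              have sM': "s < M" "s + 1 \<le> M" "r + 1 < s" using 2 by linarith+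
              have "even (t s)" using s(3) False by simp
              hence e: "t (s+1) < d + 1" using wev[of s] s(1,3) sM' by simp
              have "t (s+1) \<noteq> d" using injt[of "s+1" "r+1"] sM' rM d_def by auto
              hence e2: "t (s+1) < d" using e by linarith
              have "s + 1 \<noteq> M - 1" using e2 a_def da by auto
              hence "s + 1 < M - 1" using 2 by linarith
              moreover have "t (s+1) < t (r+1)" "t (r+1) < t (M-1)" "t (M-1) < t r"
                using e2 d_def da a_def r by auto
              ultimately show ?thesis using n2[of r "r+1" "s+1" "M-1"] r(1) M1 2 by simp
            qed
          qed
        qed
      qed
    qed
  qed
qed

definition c where "c = (\<lambda>i. if i \<in> {1..M} then M + 1 - t i else i)"

lemma c_good: "good M c"
proof
  show "c permutes {1..M}"
  proof (rule perm_intro)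
    show "inj_on c {1..M}"
    proof (rule inj_onI)
      fix x y assume xy: "x \<in> {1..M}" "y \<in> {1..M}" "c x = c y"
      hence "M + 1 - t x = M + 1 - t y" by (simp add: c_def)
      moreover have "t x \<le> M" "t y \<le> M" using rng xy by auto
      ultimately have "t x = t y" by linarith
      then show "x = y" using injt xy by auto
    qed
  next
    fix i :: nat assume i: "i \<in> {1..M}"
    then have "1 \<le> t i" "t i \<le> M" using rng by auto
    then show "c i \<in> {1..M}" using i by (simp add: c_def; linarith)
  qed (auto simp add: c_def)
  show "even M" by (rule evM)
  show "2 \<le> M" by (rule M2)
  show "W M c" unfolding W_def
  proof (intro allI impI conjI)
    fix i assume i: "1 \<le> i" "i < M"
    have r1: "1 \<le> t i" "t i \<le> M" "1 \<le> t (i+1)" "t (i+1) \<le> M" using rng[of i] rng[of "i+1"] i by auto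
    have ci: "c i = M + 1 - t i" "c (i+1) = M + 1 - t (i+1)" using i by (auto simp: c_def)
    { assume "even (c i)"
      hence "odd (t i)" using ci r1 evM par_c[of "t i" M] by simp
      hence "t i < t (i+1)" using wod i by blast
      then show "c (i+1) < c i" using ci r1 by linarith }
    { assume "odd (c i)"
      hence "even (t i)" using ci r1 evM par_c[of "t i" M] by simp
      hence "t (i+1) < t i" using wev i by blast
      then show "c i < c (i+1)" using ci r1 by linarith }
  qed
  show "\<not> P1 M c"
  proof
    assume "P1 M c"
    then obtain i j k l where h: "1 \<le> i" "i < j" "j < k" "k < l" "l \<le> M" "c i < c l" "c l < c j" "c j < c k"
      unfolding P1_def by blast
    have "t k < t j" "t j < t l" "t l < t i" using h rng[of i] rng[of j] rng[of k] rng[of l] by (auto simp: c_def)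
    then show False using n2 h by blast
  qed
  show "\<not> P2 M c"
  proof
    assume "P2 M c"
    then obtain i j k l where h: "1 \<le> i" "i < j" "j < k" "k < l" "l \<le> M" "c k < c j" "c j < c l" "c l < c i"
      unfolding P2_def by blast
    have "t i < t l" "t l < t j" "t j < t k" using h rng[of i] rng[of j] rng[of k] rng[of l] by (auto simp: c_def)
    then show False using n1 h by blast
  qed
qed

lemma E3:
  assumes "even (t M)"
  shows "t (M-1) + 1 = t M"
proof -
  interpret cc: good M c by (rule c_good)
  have r: "1 \<le> t M" "t M \<le> M" "1 \<le> t (M-1)" "t (M-1) \<le> M" using rng[of M] rng[of "M-1"] M2 by auto
  have cM: "c M = M + 1 - t M" "c (M-1) = M + 1 - t (M-1)" using M2 by (auto simp: c_def)
  have "odd (c M)" using cM r assms evM par_c[of "t M" M] by simp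
  hence "c (M-1) = c M + 1" by (rule cc.E2)
  then show ?thesis using cM r by linarith
qed

end


abbreviation "TT \<equiv> {[1,3,4,2], [4,2,1,3::nat]}"
definition S :: "nat \<Rightarrow> (nat \<Rightarrow> nat) set" where "S n = dumont1_avoid n TT"

lemma S_iff: "\<pi> \<in> S n \<longleftrightarrow> dumont1 n \<pi> \<and> \<not> P1 (2*n) \<pi> \<and> \<not> P2 (2*n) \<pi>"
  unfolding S_def dumont1_avoid_def using cp1 cp2 by auto

lemma S_good:
  assumes "\<pi> \<in> S n" "n \<ge> 1"
  shows "good (2*n) \<pi>" "odd (\<pi> (2*n))"
proof -
  have d: "dumont1 n \<pi>" and a: "\<not> P1 (2*n) \<pi>" "\<not> P2 (2*n) \<pi>" using assms S_iff by auto
  have p: "\<pi> permutes {1..2*n}" using d dumont1_def by auto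
  have c: "\<And>i. i \<in> {1..2*n} \<Longrightarrow> (even (\<pi> i) \<longrightarrow> i < 2*n \<and> \<pi> i > \<pi> (i+1)) \<and>
        (odd (\<pi> i) \<longrightarrow> i = 2*n \<or> \<pi> i < \<pi> (i+1))" using d unfolding dumont1_def by blast
  have "W (2*n) \<pi>" unfolding W_def
  proof (intro allI impI conjI)
    fix i assume i: "1 \<le> i" "i < 2*n"
    then show "even (\<pi> i) \<Longrightarrow> \<pi> (i + 1) < \<pi> i" using c[of i] by auto
    show "odd (\<pi> i) \<Longrightarrow> \<pi> i < \<pi> (i + 1)" using c[of i] i by auto
  qed
  then show "good (2*n) \<pi>" using p a assms(2) by unfold_locales auto
  show "odd (\<pi> (2*n))" using c[of "2*n"] assms(2) by auto
qed

definition fx :: "nat \<Rightarrow> (nat \<Rightarrow> nat) \<Rightarrow> nat \<Rightarrow> nat" where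
  "fx N \<pi> = (\<lambda>i. if i = N+1 then N+2 else if i = N+2 then N+1 else \<pi> i)"

definition gx :: "nat \<Rightarrow> (nat \<Rightarrow> nat) \<Rightarrow> nat \<Rightarrow> nat" where
  "gx N \<pi> = (\<lambda>i. if 1 \<le> i \<and> i+2 \<le> N then \<pi> i + 2 else if i+1 = N then \<pi> N + 2
      else if i = N then \<pi> (N-1) + 2 else if i = N+1 then 2 else if i = N+2 then 1 else i)"

definition tr :: "nat \<Rightarrow> nat \<Rightarrow> nat" where
  "tr N i = (if i+1 = N then N else if i = N then N-1 else i)"

lemma A1:
  assumes "\<pi> \<in> S n" "n \<ge> 1"
  shows "fx (2*n) \<pi> \<in> S (n+1)"
proof -
  define N where "N = 2*n"
  interpret good N \<pi> using S_good assms N_def by auto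
  have oN: "odd (\<pi> N)" using S_good assms N_def by auto
  define F where "F = fx N \<pi>"
  have Fl: "\<And>i. i \<le> N \<Longrightarrow> F i = \<pi> i" by (auto simp: F_def fx_def)
  have F1: "F (N+1) = N+2" "F (N+2) = N+1" by (auto simp: F_def fx_def)
  have nn: "2 * (n+1) = N+2" using N_def by simp
  have pF: "F permutes {1..N+2}"
  proof (rule perm_intro)
    fix i assume "i \<notin> {1..N+2}"
    then show "F i = i" using permutes_not_in[OF perm, of i] by (auto simp: F_def fx_def)
  next
    fix i assume i: "i \<in> {1..N+2}"
    then show "F i \<in> {1..N+2}" using rng[of i] Fl F1 by (cases "i \<le> N") (auto simp: le_Suc_eq)
  next
    show "inj_on F {1..N+2}"
    proof (rule inj_onI)
      fix x y assume xy: "x \<in> {1..N+2}" "y \<in> {1..N+2}" "F x = F y"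
      have c: "x \<le> N \<or> x = N+1 \<or> x = N+2" "y \<le> N \<or> y = N+1 \<or> y = N+2" using xy by auto
      show "x = y" using c xy Fl F1 rng[of x] rng[of y] injt[of x y] by auto
    qed
  qed
  have dF: "dumont1 (n+1) F" unfolding dumont1_def nn
  proof (rule conjI[OF pF], rule ballI)
    fix i assume i: "i \<in> {1..N+2}"
    have c: "i < N \<or> i = N \<or> i = N+1 \<or> i = N+2" using i by auto
    show "(even (F i) \<longrightarrow> i < N + 2 \<and> F (i + 1) < F i) \<and> (odd (F i) \<longrightarrow> i = N + 2 \<or> F i < F (i + 1))"
      using c
    proof (elim disjE)
      assume "i < N" then show ?thesis using wev[of i] wod[of i] Fl i by auto
    next
      assume "i = N" then show ?thesis using oN Fl F1 rng[of N] M2 by auto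
    next
      assume "i = N+1" then show ?thesis using F1 evM by auto
    next
      assume "i = N+2" then show ?thesis using F1 evM by auto
    qed
  qed
  have a1: "\<not> P1 (N+2) F"
  proof
    assume "P1 (N+2) F"
    then obtain i j k l where h: "1 \<le> i" "i < j" "j < k" "k < l" "l \<le> N+2" "F i < F l" "F l < F j" "F j < F k"
      unfolding P1_def by blast
    consider "l \<le> N" | "l = N+1" | "l = N+2" using h by linarith
    then show False
    proof cases
      case 1
      then show False using n1[of i j k l] h Fl by auto
    next
      case 2
      then show False using h F1 Fl rng[of j] by (cases "j \<le> N") auto
    next
      case 3
      then have "k \<le> N \<or> k = N+1" "j \<le> N" using h by auto
      then show False using 3 h F1 Fl rng[of j] rng[of k] by auto
    qed
  qed
  have a2: "\<not> P2 (N+2) F"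
  proof
    assume "P2 (N+2) F"
    then obtain i j k l where h: "1 \<le> i" "i < j" "j < k" "k < l" "l \<le> N+2" "F k < F j" "F j < F l" "F l < F i"
      unfolding P2_def by blast
    consider "l \<le> N" | "l = N+1" | "l = N+2" using h by linarith
    then show False
    proof cases
      case 1
      then show False using n2[of i j k l] h Fl by auto
    next
      case 2
      then show False using h F1 Fl rng[of i] by (cases "i \<le> N") auto
    next
      case 3
      then have "i \<le> N" using h by auto
      then show False using 3 h F1 Fl rng[of i] by auto
    qed
  qed
  show ?thesis using dF a1 a2 S_iff nn unfolding F_def N_def by auto
qed

lemma P1_mono: "P1 N t \<Longrightarrow> N \<le> M \<Longrightarrow> P1 M t" unfolding P1_def by (meson order_trans)
lemma P2_mono: "P2 N t \<Longrightarrow> N \<le> M \<Longrightarrow> P2 M t" unfolding P2_def by (meson order_trans)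

lemma tr_simps: "2 \<le> N \<Longrightarrow> i + 2 \<le> N \<Longrightarrow> tr N i = i" "2 \<le> N \<Longrightarrow> tr N (N-1) = N" "2 \<le> N \<Longrightarrow> tr N N = N - 1"
  by (auto simp: tr_def)

lemma PT:
  assumes N2: "2 \<le> N"
    and cmp: "\<And>a b. a \<in> {1..N} \<Longrightarrow> b \<in> {1..N} \<Longrightarrow> (G a < G b \<longleftrightarrow> \<pi> (tr N a) < \<pi> (tr N b))"
    and cons: "G N = G (N-1) + 1 \<or> G (N-1) = G N + 1"
  shows "P1 N G \<Longrightarrow> P1 N \<pi>" "P2 N G \<Longrightarrow> P2 N \<pi>"
proof -
  { fix i j k l assume h: "1 \<le> i" "i < j" "j < k" "k < l" "l \<le> N"
    have ij: "i + 2 \<le> N" "j + 2 \<le> N" using h by linarith+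
    have m: "i \<in> {1..N}" "j \<in> {1..N}" "k \<in> {1..N}" "l \<in> {1..N}" using h by auto
    have ti: "tr N i = i" "tr N j = j" using tr_simps(1)[OF N2 ij(1)] tr_simps(1)[OF N2 ij(2)] by auto
    have c14: "G i < G l \<longleftrightarrow> \<pi> i < \<pi> (tr N l)" using cmp[OF m(1) m(4)] ti by simp
    have c42: "G l < G j \<longleftrightarrow> \<pi> (tr N l) < \<pi> j" using cmp[OF m(4) m(2)] ti by simp
    have c23: "G j < G k \<longleftrightarrow> \<pi> j < \<pi> (tr N k)" using cmp[OF m(2) m(3)] ti by simp
    have c32: "G k < G j \<longleftrightarrow> \<pi> (tr N k) < \<pi> j" using cmp[OF m(3) m(2)] ti by simp
    have c24: "G j < G l \<longleftrightarrow> \<pi> j < \<pi> (tr N l)" using cmp[OF m(2) m(4)] ti by simp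
    have c41: "G l < G i \<longleftrightarrow> \<pi> (tr N l) < \<pi> i" using cmp[OF m(4) m(1)] ti by simp
    have cs: "(k + 2 \<le> N \<and> tr N k = k \<and> tr N l > k \<and> tr N l \<le> N) \<or> (l = N \<and> k = N - 1)"
    proof (cases "k + 2 \<le> N")
      case True
      have "l + 2 \<le> N \<or> l = N - 1 \<or> l = N" using h by linarith
      then show ?thesis using tr_simps[OF N2] True h by auto
    next
      case False
      then show ?thesis using h by linarith
    qed
    { assume g: "G i < G l" "G l < G j" "G j < G k"
      have "P1 N \<pi>" using cs
      proof (elim disjE conjE)
        assume a: "k + 2 \<le> N" "tr N k = k" "k < tr N l" "tr N l \<le> N"
        show ?thesis unfolding P1_def
          by (rule exI[of _ i], rule exI[of _ j], rule exI[of _ k], rule exI[of _ "tr N l"])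
            (use a g c14 c42 c23 h in auto)
      next
        assume a: "l = N" "k = N - 1"
        show ?thesis using g cons a by auto
      qed }
    moreover
    { assume g: "G k < G j" "G j < G l" "G l < G i"
      have "P2 N \<pi>" using cs
      proof (elim disjE conjE)
        assume a: "k + 2 \<le> N" "tr N k = k" "k < tr N l" "tr N l \<le> N"
        show ?thesis unfolding P2_def
          by (rule exI[of _ i], rule exI[of _ j], rule exI[of _ k], rule exI[of _ "tr N l"])
            (use a g c32 c24 c41 h in auto)
      next
        assume a: "l = N" "k = N - 1"
        show ?thesis using g cons a by auto
      qed }
    ultimately have "(G i < G l \<and> G l < G j \<and> G j < G k \<longrightarrow> P1 N \<pi>) \<and> (G k < G j \<and> G j < G l \<and> G l < G i \<longrightarrow> P2 N \<pi>)"
      by blast }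
  note * = this
  show "P1 N G \<Longrightarrow> P1 N \<pi>" using * unfolding P1_def[of N G] by blast
  show "P2 N G \<Longrightarrow> P2 N \<pi>" using * unfolding P2_def[of N G] by blast
qed

lemma A2:
  assumes "\<pi> \<in> S n" "n \<ge> 1"
  shows "gx (2*n) \<pi> \<in> S (n+1)"
proof -
  define N where "N = 2*n"
  interpret good N \<pi> using S_good assms N_def by auto
  have oN: "odd (\<pi> N)" using S_good assms N_def by auto
  define x where "x = \<pi> N"
  have xv: "\<pi> (N-1) = x + 1" using E2[OF oN] x_def by simp
  have xr: "1 \<le> x" "x + 1 \<le> N" using rng[of "N-1"] rng[of N] M2 xv x_def by auto
  define G where "G = gx N \<pi>"
  have nn: "2 * (n+1) = N+2" using N_def by simp
  have G1: "\<And>i. 1 \<le> i \<Longrightarrow> i + 2 \<le> N \<Longrightarrow> G i = \<pi> i + 2" by (auto simp: G_def gx_def)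
  have G2: "G (N-1) = x + 2" "G N = x + 3" "G (N+1) = 2" "G (N+2) = 1"
    using M2 xv by (auto simp: G_def gx_def x_def)
  have Gout: "\<And>i. i \<notin> {1..N+2} \<Longrightarrow> G i = i" using M2 by (auto simp: G_def gx_def)
  have Gtr: "\<And>i. i \<in> {1..N} \<Longrightarrow> G i = \<pi> (tr N i) + 2 \<and> tr N i \<in> {1..N}"
  proof -
    fix i assume i: "i \<in> {1..N}"
    then consider "i + 2 \<le> N" | "i = N - 1" | "i = N" by fastforce
    then show "G i = \<pi> (tr N i) + 2 \<and> tr N i \<in> {1..N}"
    proof cases
      case 1 then show ?thesis using G1[of i] tr_simps(1)[OF M2 1] i by simp
    next
      case 2 then show ?thesis using G2(1) tr_simps(2)[OF M2] x_def M2 by simp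
    next
      case 3 then show ?thesis using G2(2) tr_simps(3)[OF M2] xv M2 by simp
    qed
  qed
  have trinj: "\<And>a b. a \<in> {1..N} \<Longrightarrow> b \<in> {1..N} \<Longrightarrow> tr N a = tr N b \<Longrightarrow> a = b"
    unfolding tr_def by (simp split: if_split_asm; linarith)
  have pG: "G permutes {1..N+2}"
  proof (rule perm_intro)
    fix i assume "i \<notin> {1..N+2}" then show "G i = i" by (rule Gout)
  next
    fix i assume i: "i \<in> {1..N+2}"
    then consider "i \<in> {1..N}" | "i = N+1" | "i = N+2" by fastforce
    then show "G i \<in> {1..N+2}"
    proof cases
      case 1 then show ?thesis using Gtr[of i] rng[of "tr N i"] by auto
    qed (use G2 in auto)
  next
    show "inj_on G {1..N+2}"
    proof (rule inj_onI)
      fix a b assume ab: "a \<in> {1..N+2}" "b \<in> {1..N+2}" "G a = G b"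
      have ca: "a \<in> {1..N} \<or> a = N+1 \<or> a = N+2" "b \<in> {1..N} \<or> b = N+1 \<or> b = N+2" using ab by auto
      have "a \<in> {1..N} \<Longrightarrow> G a \<ge> 3" using Gtr[of a] rng[of "tr N a"] by auto
      moreover have "b \<in> {1..N} \<Longrightarrow> G b \<ge> 3" using Gtr[of b] rng[of "tr N b"] by auto
      moreover have "a \<in> {1..N} \<Longrightarrow> b \<in> {1..N} \<Longrightarrow> a = b"
        using Gtr[of a] Gtr[of b] ab(3) injt[of "tr N a" "tr N b"] trinj[of a b] by auto
      ultimately show "a = b" using ca ab(3) G2 by auto
    qed
  qed
  have dG: "dumont1 (n+1) G" unfolding dumont1_def nn
  proof (rule conjI[OF pG], rule ballI)
    fix i assume i: "i \<in> {1..N+2}"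
    have c: "i + 3 \<le> N \<or> i + 2 = N \<or> i + 1 = N \<or> i = N \<or> i = N+1 \<or> i = N+2" using i evM by auto
    show "(even (G i) \<longrightarrow> i < N + 2 \<and> G (i + 1) < G i) \<and> (odd (G i) \<longrightarrow> i = N + 2 \<or> G i < G (i + 1))"
      using c
    proof (elim disjE)
      assume a: "i + 3 \<le> N"
      have "G i = \<pi> i + 2" "G (i+1) = \<pi> (i+1) + 2" using G1[of i] G1[of "i+1"] a i by auto
      then show ?thesis using wev[of i] wod[of i] i a by auto
    next
      assume a: "i + 2 = N"
      have g: "G i = \<pi> i + 2" "G (i+1) = x + 2" using G1[of i] G2 a i by auto
      have "\<pi> i \<noteq> x" using injt[of i N] a i x_def by auto
      moreover have "\<pi> (i+1) = x + 1"
      proof -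
        have "i + 1 = N - 1" using a by linarith
        then show ?thesis using xv by simp
      qed
      ultimately show ?thesis using g wev[of i] wod[of i] i a by auto
    next
      assume a: "i + 1 = N"
      then have "i = N - 1" by auto
      then show ?thesis using G2 oN x_def a by auto
    next
      assume a: "i = N"
      then show ?thesis using G2 oN x_def by auto
    qed (use G2 evM in auto)
  qed
  have cmp: "\<And>a b. a \<in> {1..N} \<Longrightarrow> b \<in> {1..N} \<Longrightarrow> (G a < G b \<longleftrightarrow> \<pi> (tr N a) < \<pi> (tr N b))"
    using Gtr by auto
  have cons: "G N = G (N-1) + 1 \<or> G (N-1) = G N + 1" using G2 by auto
  have a1: "\<not> P1 (N+2) G"
  proof
    assume "P1 (N+2) G"
    then obtain i j k l where h: "1 \<le> i" "i < j" "j < k" "k < l" "l \<le> N+2" "G i < G l" "G l < G j" "G j < G k"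
      unfolding P1_def by blast
    show False
    proof (cases "l \<le> N")
      case True
      then have "P1 N G" unfolding P1_def using h by blast
      then show False using PT(1)[OF M2 cmp cons] nP1 by blast
    next
      case False
      then have "l = N+1 \<or> l = N+2" using h by auto
      moreover have "i \<in> {1..N} \<or> i = N+1" using h by auto
      ultimately show False using h G2 Gtr[of i] by auto
    qed
  qed
  have a2: "\<not> P2 (N+2) G"
  proof
    assume "P2 (N+2) G"
    then obtain i j k l where h: "1 \<le> i" "i < j" "j < k" "k < l" "l \<le> N+2" "G k < G j" "G j < G l" "G l < G i"
      unfolding P2_def by blast
    show False
    proof (cases "l \<le> N")
      case True
      then have "P2 N G" unfolding P2_def using h by blast
      then show False using PT(2)[OF M2 cmp cons] nP2 by blast
    next
      case False
      then have "l = N+1 \<or> l = N+2" using h by auto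
      moreover have "k \<in> {1..N} \<or> k = N+1" using h by auto
      moreover have "j \<in> {1..N}" using h by auto
      ultimately show False using h G2 Gtr[of j] Gtr[of k] by auto
    qed
  qed
  show ?thesis using dG a1 a2 S_iff nn unfolding G_def N_def by auto
qed

lemma B:
  assumes "\<pi> \<in> S (n+1)" "n \<ge> 1"
  shows "\<pi> \<in> fx (2*n) ` S n \<union> gx (2*n) ` S n"
proof -
  define N where "N = 2*n"
  have nn: "2 * (n+1) = N+2" using N_def by simp
  have N2: "2 \<le> N" "even N" using N_def assms by auto
  interpret good "N+2" \<pi> using S_good[OF assms(1)] nn by auto
  have oN: "odd (\<pi> (N+2))" using S_good[OF assms(1)] nn by auto
  have xc: "\<pi> (N+2) = 1 \<or> \<pi> (N+2) = N+1" using E1[OF oN] by simp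
  have xv: "\<pi> (N+1) = \<pi> (N+2) + 1" using E2[OF oN] by simp
  have pa: "\<pi> permutes {1..N+2}" by (rule perm)
  show ?thesis
  proof (cases "\<pi> (N+2) = N+1")
    case True
    have p1: "\<pi> (N+1) = N+2" using xv True by simp
    define \<rho> where "\<rho> = (\<lambda>i. if i = N+1 \<or> i = N+2 then i else \<pi> i)"
    have rl: "\<And>i. i \<le> N \<Longrightarrow> \<rho> i = \<pi> i" by (auto simp: \<rho>_def)
    have rlr: "\<And>i. 1 \<le> i \<Longrightarrow> i \<le> N \<Longrightarrow> 1 \<le> \<pi> i \<and> \<pi> i \<le> N"
    proof -
      fix i assume i: "1 \<le> i" "i \<le> N"
      have "\<pi> i \<noteq> N+1" using injt[of i "N+2"] i True by auto
      moreover have "\<pi> i \<noteq> N+2" using injt[of i "N+1"] i p1 by auto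
      ultimately show "1 \<le> \<pi> i \<and> \<pi> i \<le> N" using rng[of i] i by auto
    qed
    have pr: "\<rho> permutes {1..N}"
    proof (rule perm_intro)
      fix i assume "i \<notin> {1..N}"
      then show "\<rho> i = i" using permutes_not_in[OF pa, of i] by (auto simp: \<rho>_def)
    next
      fix i assume "i \<in> {1..N}" then show "\<rho> i \<in> {1..N}" using rl rlr by auto
    next
      show "inj_on \<rho> {1..N}"
      proof (rule inj_onI)
        fix a b assume ab: "a \<in> {1..N}" "b \<in> {1..N}" "\<rho> a = \<rho> b"
        then have "\<pi> a = \<pi> b" using rl[of a] rl[of b] by auto
        then show "a = b" using injt[of a b] ab by auto
      qed
    qed
    have dr: "dumont1 n \<rho>" unfolding dumont1_def N_def[symmetric]
    proof (rule conjI[OF pr], rule ballI)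
      fix i assume i: "i \<in> {1..N}"
      show "(even (\<rho> i) \<longrightarrow> i < N \<and> \<rho> (i + 1) < \<rho> i) \<and> (odd (\<rho> i) \<longrightarrow> i = N \<or> \<rho> i < \<rho> (i + 1))"
      proof (cases "i < N")
        case True
        then show ?thesis using wev[of i] wod[of i] rl[of i] rl[of "i+1"] i by auto
      next
        case False
        then have iN: "i = N" using i by auto
        have "\<pi> N < \<pi> (N+1)" using rlr[of N] N2 p1 by auto
        then have "odd (\<pi> N)" using wev[of N] N2 by fastforce
        then show ?thesis using iN rl[of N] by auto
      qed
    qed
    have "\<not> P1 N \<rho>"
    proof
      assume "P1 N \<rho>"
      then obtain i j k l where h: "1 \<le> i" "i < j" "j < k" "k < l" "l \<le> N" "\<rho> i < \<rho> l" "\<rho> l < \<rho> j" "\<rho> j < \<rho> k"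
        unfolding P1_def by blast
      then have "P1 N \<pi>" unfolding P1_def using rl[of i] rl[of j] rl[of k] rl[of l]
        by (intro exI[of _ i] exI[of _ j] exI[of _ k] exI[of _ l]) auto
      then show False using nP1 P1_mono[of N \<pi> "N+2"] by auto
    qed
    moreover have "\<not> P2 N \<rho>"
    proof
      assume "P2 N \<rho>"
      then obtain i j k l where h: "1 \<le> i" "i < j" "j < k" "k < l" "l \<le> N" "\<rho> k < \<rho> j" "\<rho> j < \<rho> l" "\<rho> l < \<rho> i"
        unfolding P2_def by blast
      then have "P2 N \<pi>" unfolding P2_def using rl[of i] rl[of j] rl[of k] rl[of l]
        by (intro exI[of _ i] exI[of _ j] exI[of _ k] exI[of _ l]) auto
      then show False using nP2 P2_mono[of N \<pi> "N+2"] by auto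
    qed
    ultimately have "\<rho> \<in> S n" using dr S_iff N_def by auto
    moreover have "fx N \<rho> = \<pi>" using True p1 by (auto simp: fx_def \<rho>_def)
    ultimately show ?thesis using N_def by auto
  next
    case False
    then have x1: "\<pi> (N+2) = 1" "\<pi> (N+1) = 2" using xc xv by auto
    have r3: "\<And>i. 1 \<le> i \<Longrightarrow> i \<le> N \<Longrightarrow> 3 \<le> \<pi> i \<and> \<pi> i \<le> N+2"
    proof -
      fix i assume i: "1 \<le> i" "i \<le> N"
      have "\<pi> i \<noteq> 1" using injt[of i "N+2"] i x1 by auto
      moreover have "\<pi> i \<noteq> 2" using injt[of i "N+1"] i x1 by auto
      ultimately show "3 \<le> \<pi> i \<and> \<pi> i \<le> N+2" using rng[of i] i by auto
    qed
    define \<tau> where "\<tau> = (\<lambda>i. if i \<in> {1..N} then \<pi> i - 2 else i)"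
    have tg: "good N \<tau>"
    proof
      show "\<tau> permutes {1..N}"
      proof (rule perm_intro)
        fix i assume "i \<in> {1..N}" then show "\<tau> i \<in> {1..N}" using r3[of i] by (auto simp: \<tau>_def)
      next
        show "inj_on \<tau> {1..N}"
        proof (rule inj_onI)
          fix a b assume ab: "a \<in> {1..N}" "b \<in> {1..N}" "\<tau> a = \<tau> b"
          then have "\<pi> a = \<pi> b" using r3[of a] r3[of b] by (auto simp: \<tau>_def)
          then show "a = b" using injt ab by auto
        qed
      qed (auto simp: \<tau>_def)
      show "even N" "2 \<le> N" using N2 by auto
      show "W N \<tau>" unfolding W_def
      proof (intro allI impI conjI)
        fix i assume i: "1 \<le> i" "i < N"
        have e: "\<tau> i = \<pi> i - 2" "\<tau> (i+1) = \<pi> (i+1) - 2" using i by (auto simp: \<tau>_def)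
        have r: "3 \<le> \<pi> i" "3 \<le> \<pi> (i+1)" using r3[of i] r3[of "i+1"] i by auto
        have par: "even (\<tau> i) \<longleftrightarrow> even (\<pi> i)" using e r by (simp add: even_diff_nat)
        show "even (\<tau> i) \<Longrightarrow> \<tau> (i+1) < \<tau> i" using wev[of i] i e r par by auto
        show "odd (\<tau> i) \<Longrightarrow> \<tau> i < \<tau> (i+1)" using wod[of i] i e r par by auto
      qed
      show "\<not> P1 N \<tau>"
      proof
        assume "P1 N \<tau>"
        then obtain i j k l where h: "1 \<le> i" "i < j" "j < k" "k < l" "l \<le> N" "\<tau> i < \<tau> l" "\<tau> l < \<tau> j" "\<tau> j < \<tau> k"
          unfolding P1_def by blast
        have "\<pi> i < \<pi> l" "\<pi> l < \<pi> j" "\<pi> j < \<pi> k" using h r3[of i] r3[of j] r3[of k] r3[of l] by (auto simp: \<tau>_def)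
        then show False using n1[of i j k l] h by auto
      qed
      show "\<not> P2 N \<tau>"
      proof
        assume "P2 N \<tau>"
        then obtain i j k l where h: "1 \<le> i" "i < j" "j < k" "k < l" "l \<le> N" "\<tau> k < \<tau> j" "\<tau> j < \<tau> l" "\<tau> l < \<tau> i"
          unfolding P2_def by blast
        have "\<pi> k < \<pi> j" "\<pi> j < \<pi> l" "\<pi> l < \<pi> i" using h r3[of i] r3[of j] r3[of k] r3[of l] by (auto simp: \<tau>_def)
        then show False using n2[of i j k l] h by auto
      qed
    qed
    have eN: "even (\<pi> N)"
    proof (rule ccontr)
      assume "odd (\<pi> N)"
      then have "\<pi> N < \<pi> (N+1)" using wod[of N] N2 by auto
      then show False using r3[of N] x1 N2 by auto
    qed
    have tN: "\<tau> N = \<pi> N - 2" "\<tau> (N-1) = \<pi> (N-1) - 2" using N2 by (auto simp: \<tau>_def)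
    have "even (\<tau> N)" using tN eN r3[of N] N2 by (simp add: even_diff_nat)
    then have "\<tau> (N-1) + 1 = \<tau> N" using good.E3[OF tg] by simp
    moreover have "3 \<le> \<pi> (N-1)" "3 \<le> \<pi> N" using r3[of N] r3[of "N-1"] N2 by auto
    ultimately have ev: "\<pi> (N-1) + 1 = \<pi> N" using tN by linarith
    define e where "e = \<pi> N"
    have e4: "4 \<le> e" using eN r3[of N] N2 e_def by presburger
    define \<rho> where "\<rho> = (\<lambda>i. if i \<in> {1..N} then \<pi> (tr N i) - 2 else i)"
    have trinj: "\<And>a b. a \<in> {1..N} \<Longrightarrow> b \<in> {1..N} \<Longrightarrow> tr N a = tr N b \<Longrightarrow> a = b"
      unfolding tr_def by (simp split: if_split_asm; linarith)
    have trr: "\<And>a. a \<in> {1..N} \<Longrightarrow> tr N a \<in> {1..N}" using N2 unfolding tr_def by auto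
    have R1: "\<And>i. 1 \<le> i \<Longrightarrow> i + 2 \<le> N \<Longrightarrow> \<rho> i = \<pi> i - 2" using tr_simps(1)[OF N2(1)] by (auto simp: \<rho>_def)
    have R2: "\<rho> (N-1) = e - 2" "\<rho> N = e - 3" using N2 tr_simps(2,3)[OF N2(1)] ev e_def by (auto simp: \<rho>_def)
    have pr: "\<rho> permutes {1..N}"
    proof (rule perm_intro)
      fix i assume "i \<in> {1..N}" then show "\<rho> i \<in> {1..N}" using r3[of "tr N i"] trr[of i] by (auto simp: \<rho>_def)
    next
      show "inj_on \<rho> {1..N}"
      proof (rule inj_onI)
        fix a b assume ab: "a \<in> {1..N}" "b \<in> {1..N}" "\<rho> a = \<rho> b"
        then have "\<pi> (tr N a) = \<pi> (tr N b)" using r3[of "tr N a"] r3[of "tr N b"] trr[of a] trr[of b] by (auto simp: \<rho>_def)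
        then have "tr N a = tr N b" using injt trr[of a] trr[of b] ab by auto
        then show "a = b" using trinj ab by auto
      qed
    qed (auto simp: \<rho>_def)
    have dr: "dumont1 n \<rho>" unfolding dumont1_def N_def[symmetric]
    proof (rule conjI[OF pr], rule ballI)
      fix i assume i: "i \<in> {1..N}"
      have c: "i + 3 \<le> N \<or> i + 2 = N \<or> i + 1 = N \<or> i = N" using i by auto
      show "(even (\<rho> i) \<longrightarrow> i < N \<and> \<rho> (i + 1) < \<rho> i) \<and> (odd (\<rho> i) \<longrightarrow> i = N \<or> \<rho> i < \<rho> (i + 1))"
        using c
      proof (elim disjE)
        assume a: "i + 3 \<le> N"
        have g: "\<rho> i = \<pi> i - 2" "\<rho> (i+1) = \<pi> (i+1) - 2" using R1[of i] R1[of "i+1"] a i by auto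
        have r: "3 \<le> \<pi> i" "3 \<le> \<pi> (i+1)" using r3[of i] r3[of "i+1"] i a by auto
        have par: "even (\<rho> i) \<longleftrightarrow> even (\<pi> i)" using g r by (simp add: even_diff_nat)
        show ?thesis using wev[of i] wod[of i] i a g r par by auto
      next
        assume a: "i + 2 = N"
        have g: "\<rho> i = \<pi> i - 2" "\<rho> (i+1) = e - 2" using R1[of i] R2 a i by auto
        have r: "3 \<le> \<pi> i" using r3[of i] i by auto
        have par: "even (\<rho> i) \<longleftrightarrow> even (\<pi> i)" using g r by (simp add: even_diff_nat)
        have "\<pi> i \<noteq> e" using injt[of i N] a i e_def by auto
        moreover have "\<pi> (i+1) = e - 1"
        proof -
          have "i + 1 = N - 1" using a by linarith
          then show ?thesis using ev e_def by simp
        qed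
        ultimately show ?thesis using g r par wev[of i] wod[of i] i a e4 by auto
      next
        assume a: "i + 1 = N"
        then have "i = N - 1" by auto
        then show ?thesis using R2 e4 eN e_def a by (auto simp: even_diff_nat)
      next
        assume a: "i = N"
        have "odd (e - 3)" using eN e4 e_def by (simp add: even_diff_nat)
        then show ?thesis using R2 a by auto
      qed
    qed
    have cmp: "\<And>a b. a \<in> {1..N} \<Longrightarrow> b \<in> {1..N} \<Longrightarrow> (\<rho> a < \<rho> b \<longleftrightarrow> \<pi> (tr N a) < \<pi> (tr N b))"
    proof -
      fix a b assume ab: "a \<in> {1..N}" "b \<in> {1..N}"
      then show "(\<rho> a < \<rho> b \<longleftrightarrow> \<pi> (tr N a) < \<pi> (tr N b))"
        using r3[of "tr N a"] r3[of "tr N b"] trr[of a] trr[of b] by (auto simp: \<rho>_def)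
    qed
    have cons: "\<rho> N = \<rho> (N-1) + 1 \<or> \<rho> (N-1) = \<rho> N + 1" using R2 e4 by auto
    have "\<not> P1 N \<rho>" using PT(1)[OF N2(1) cmp cons] nP1 P1_mono[of N \<pi> "N+2"] by auto
    moreover have "\<not> P2 N \<rho>" using PT(2)[OF N2(1) cmp cons] nP2 P2_mono[of N \<pi> "N+2"] by auto
    ultimately have "\<rho> \<in> S n" using dr S_iff N_def by auto
    moreover have "gx N \<rho> = \<pi>"
    proof
      fix i
      consider "1 \<le> i \<and> i + 2 \<le> N" | "i + 1 = N" | "i = N" | "i = N+1" | "i = N+2" | "i \<notin> {1..N+2}"
        by fastforce
      then show "gx N \<rho> i = \<pi> i"
      proof cases
        case 1 then show ?thesis using R1[of i] r3[of i] by (auto simp: gx_def)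
      next
        case 2
        then have "i = N - 1" by auto
        then show ?thesis using R2 N2 ev e4 e_def 2 by (auto simp: gx_def)
      next
        case 3 then show ?thesis using R2 N2 e4 e_def by (auto simp: gx_def)
      next
        case 4 then show ?thesis using x1 by (auto simp: gx_def)
      next
        case 5 then show ?thesis using x1 by (auto simp: gx_def)
      next
        case 6 then show ?thesis using permutes_not_in[OF pa, of i] N2 by (auto simp: gx_def)
      qed
    qed
    ultimately show ?thesis using N_def by auto
  qed
qed

lemma finS: "finite (S n)"
proof (rule finite_subset)
  show "S n \<subseteq> {\<pi>. \<pi> permutes {1..2*n}}" using S_iff dumont1_def by auto
  show "finite {\<pi>. \<pi> permutes {1..2*n}}" by (rule finite_permutations) simp
qed

definition sw :: "nat \<Rightarrow> nat" where "sw = (\<lambda>i. if i = 1 then 2 else if i = 2 then 1 else i)"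

lemma S1: "S 1 = {sw}"
proof
  show "S 1 \<subseteq> {sw}"
  proof
    fix \<pi> assume a: "\<pi> \<in> S 1"
    interpret good 2 \<pi> using S_good[OF a] by auto
    have o: "odd (\<pi> 2)" using S_good[OF a] by auto
    have "\<pi> 2 = 1" using E1[OF o] by simp
    moreover have "\<pi> 1 = 2" using E2[OF o] \<open>\<pi> 2 = 1\<close> by simp
    ultimately have "\<pi> = sw" using permutes_not_in[OF perm] by (auto simp: sw_def)
    then show "\<pi> \<in> {sw}" by simp
  qed
  have p: "sw permutes {1..2}"
  proof (rule perm_intro)
    show "inj_on sw {1..2}" by (auto simp: inj_on_def sw_def)
  qed (auto simp: sw_def)
  have d: "dumont1 1 sw" unfolding dumont1_def using p by (auto simp: sw_def)
  have "\<not> P1 2 sw" "\<not> P2 2 sw" unfolding P1_def P2_def by auto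
  then show "{sw} \<subseteq> S 1" using d S_iff by auto
qed

lemma Sstep: "n \<ge> 1 \<Longrightarrow> S (n+1) = fx (2*n) ` S n \<union> gx (2*n) ` S n"
  using A1 A2 B by blast

lemma injf: "inj_on (fx (2*n)) (S n)"
proof (rule inj_onI)
  fix a b assume ab: "a \<in> S n" "b \<in> S n" "fx (2*n) a = fx (2*n) b"
  have pa: "a permutes {1..2*n}" "b permutes {1..2*n}" using ab S_iff dumont1_def by auto
  show "a = b"
  proof
    fix i
    show "a i = b i"
    proof (cases "i = 2*n+1 \<or> i = 2*n+2")
      case True then show ?thesis using permutes_not_in[OF pa(1), of i] permutes_not_in[OF pa(2), of i] by auto
    next
      case False then show ?thesis using fun_cong[OF ab(3), of i] by (auto simp: fx_def)
    qed
  qed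
qed

lemma injg: "n \<ge> 1 \<Longrightarrow> inj_on (gx (2*n)) (S n)"
proof (rule inj_onI)
  fix a b assume n: "n \<ge> 1" and ab: "a \<in> S n" "b \<in> S n" "gx (2*n) a = gx (2*n) b"
  have pa: "a permutes {1..2*n}" "b permutes {1..2*n}" using ab S_iff dumont1_def by auto
  show "a = b"
  proof
    fix i
    consider "1 \<le> i \<and> i + 2 \<le> 2*n" | "i + 1 = 2*n" | "i = 2*n" | "i \<notin> {1..2*n}" by fastforce
    then show "a i = b i"
    proof cases
      case 1 then show ?thesis using fun_cong[OF ab(3), of i] by (auto simp: gx_def)
    next
      case 2
      have "gx (2*n) a (2*n) = gx (2*n) b (2*n)" using ab(3) by simp
      moreover have "i = 2*n - 1" using 2 by auto
      ultimately show ?thesis using n by (auto simp: gx_def)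
    next
      case 3
      have "gx (2*n) a (2*n-1) = gx (2*n) b (2*n-1)" using ab(3) by simp
      then show ?thesis using 3 n by (auto simp: gx_def)
    next
      case 4 then show ?thesis using permutes_not_in[OF pa(1), of i] permutes_not_in[OF pa(2), of i] by auto
    qed
  qed
qed

lemma disj: "n \<ge> 1 \<Longrightarrow> fx (2*n) ` S n \<inter> gx (2*n) ` S n = {}"
proof -
  assume n: "n \<ge> 1"
  { fix a b assume "fx (2*n) a = gx (2*n) b"
    then have "fx (2*n) a (2*n+2) = gx (2*n) b (2*n+2)" by simp
    then have False using n by (simp add: fx_def gx_def) }
  then show ?thesis by blast
qed

lemma cardS: "n \<ge> 1 \<Longrightarrow> card (S n) = 2 ^ (n - 1)"
proof (induction n rule: nat_induct_at_least)
  case base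
  then show ?case using S1 by simp
next
  case (Suc n)
  have "card (S (Suc n)) = card (fx (2*n) ` S n \<union> gx (2*n) ` S n)" using Sstep[OF Suc.hyps] by simp
  also have "\<dots> = card (fx (2*n) ` S n) + card (gx (2*n) ` S n)"
    by (rule card_Un_disjoint) (use finS disj[OF Suc.hyps] in auto)
  also have "\<dots> = card (S n) + card (S n)"
    using card_image[OF injf] card_image[OF injg[OF Suc.hyps]] by simp
  also have "\<dots> = 2 ^ (Suc n - 1)" using Suc.IH Suc.hyps by (cases n) auto
  finally show ?case .
qed

theorem theorem3p9:
  fixes n :: nat
  assumes "n \<ge> 1"
  shows "card (dumont1_avoid n {[1,3,4,2], [4,2,1,3]}) = 2 ^ (n - 1)"
  using cardS[OF assms] unfolding S_def by simp

end
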